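(* Consider the $v$-step controllable system described in the context, so that $(A+BK)^v=0$ with $v\ge 1$. Fix a time slot $k$ and condition on the realized sequence of scheduling actions and transmission outcomes $\{a_j,\delta_j,\gamma_j\}_{j<k}$. Assume that at least $v$ successful controller's transmissions occurred before slot $k$, and that at least one successful sensor's transmission occurred before slot $t^v_k$. Then the plant-state covariance $P_k=\mathbb{E}[x_kx_k^\top]$, where the expectation is over the disturbances, equals $$P_k=F(\phi^0_k)+\sum_{i=0}^{v-2} G\Big(\sum_{j=0}^{i}\phi^j_k-\sum_{j=0}^{i}\tau^{j+1}_k,\ \mathbb{1}(\phi^{i+1}_k>\tau^{i+1}_k)\big(F(\phi^{i+1}_k)-F(\tau^{i+1}_k)\big)\Big).$$ Here an empty sum is zero, so for $v=1$ the formula reads $P_k=F(\phi^0_k)$, and $$G(x,Y)=(A+BK)^xY\big((A+BK)^x\big)^\top .$$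
   Context: Time is discrete, $k=0,1,2,\dots$, and the plant evolves as $x_{k+1}=Ax_k+Bu_k+w_k$. Here $x_k\in\mathbb{R}^n$ and $u_k\in\mathbb{R}^m$, the matrices $A,B$ are constant, and $\{w_k\}$ is i.i.d. zero-mean Gaussian noise with positive definite covariance $R$, independent of the initial state. The spectral radius satisfies $\rho(A)>1$. In each slot $k$ a half-duplex controller chooses $a_k\in\{1,2\}$. If $a_k=1$, the sensor sends the exact state $x_k$ to the controller; if $a_k=2$, the controller sends a control packet to the actuator. Set $\delta_k=1$ iff $a_k=1$ and the sensor's transmission succeeds, and $\delta_k=0$ otherwise. Set $\gamma_k=1$ iff $a_k=2$ and the controller's transmission succeeds, and $\gamma_k=0$ otherwise. The controller's estimate is $\hat x_{k+1}=Ax_k+Bu_k$ if $a_k=1,\delta_k=1$, and $\hat x_{k+1}=A\hat x_k+Bu_k$ otherwise. The controller gain $K\in\mathbb{R}^{m\times n}$ satisfies $\rho(A+BK)<1$, and the prediction length is $v$. In slot $k$ the controller forms the command sequence $\mathcal{C}_k=[K\hat x_k,\,K(A+BK)\hat x_k,\dots,K(A+BK)^{v-1}\hat x_k]$. The actuator keeps a buffer $\mathcal{U}_k=[u^0_k,\dots,u^{v-1}_k]$. It sets $\mathcal{U}_k=\mathcal{C}_k$ if $a_k=2,\gamma_k=1$, and otherwise sets $\mathcal{U}_k=[u^1_{k-1},\dots,u^{v-1}_{k-1},0]$. The applied input is $u_k=u^0_k$. The plant is called $v$-step controllable if $(A+BK)^v=0$; for $v=1$ this means $A+BK=0$. Define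 $F(\tau)=\sum_{i=1}^{\tau}A^{i-1}R(A^\top)^{i-1}$ for $\tau\in\mathbb{N}$. The estimation-quality indicator is $\tau_k$, with $\tau_{k+1}=1$ if $a_k=1,\delta_k=1$ and $\tau_{k+1}=\tau_k+1$ otherwise. It counts the slots since the last successful sensor's transmission. For $i=1,\dots,v$, let $t^i_k$ be the time-slot index of the $i$-th most recent successful controller's transmission strictly before slot $k$; that is, $t^1_k>t^2_k>\dots$ are the slots $j<k$ with $a_j=2,\gamma_j=1$. The state parameters are defined as follows: - $\tau^0_k=\tau_k$, and $\tau^i_k=\tau_{t^i_k}$ for $i=1,\dots,v$. - $\eta^0_k=k-t^1_k$, and $\eta^i_k=t^i_k-t^{i+1}_k$ for $i=1,\dots,v-1$. - $\phi^i_k=\eta^i_k+\tau^{i+1}_k$ for $i=0,\dots,v-1$. *)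

theory Defs
  imports "HOL-Analysis.Analysis" "HOL-Probability.Probability"
begin

fun mpow :: "real^'n^'n \<Rightarrow> nat \<Rightarrow> real^'n^'n" where
  "mpow M 0 = mat 1"
| "mpow M (Suc k) = M ** mpow M k"

definition cmat :: "real^'n^'n \<Rightarrow> complex^'n^'n" where
  "cmat M = (\<chi> i j. complex_of_real (M $ i $ j))"

definition spectral_radius :: "real^'n^'n \<Rightarrow> real" where
  "spectral_radius M =
     Max ((\<lambda>l. cmod l) ` {l. \<exists>x. x \<noteq> 0 \<and> cmat M *v x = l *s x})"

definition pos_def :: "real^'n^'n \<Rightarrow> bool" where
  "pos_def R \<longleftrightarrow> transpose R = R \<and> (\<forall>x. x \<noteq> 0 \<longrightarrow> x \<bullet> (R *v x) > 0)"

text \<open>Zero-mean multivariate Gaussian with covariance R (Cramer-Wold characterisation: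
  every nontrivial linear functional is a centred normal with variance c'Rc).\<close>
definition centered_gaussian :: "'w measure \<Rightarrow> ('w \<Rightarrow> real^'n) \<Rightarrow> real^'n^'n \<Rightarrow> bool" where
  "centered_gaussian M X R \<longleftrightarrow> X \<in> borel_measurable M \<and>
     (\<forall>c. c \<noteq> 0 \<longrightarrow>
        distributed M lborel (\<lambda>\<omega>. c \<bullet> X \<omega>) (\<lambda>y. ennreal (normal_density 0 (sqrt (c \<bullet> (R *v c))) y)))"

definition outer :: "real^'n \<Rightarrow> real^'n^'n" where
  "outer x = (\<chi> i j. x $ i * x $ j)"

text \<open>Actions a k \<in> {1,2}; dl k = (a k = 1 and sensor transmission succeeds);
  gm k = (a k = 2 and controller transmission succeeds).
  sys ... k = (x_k, xhat_k, U_{k-1}) where U_{-1} = U0 is an arbitrary initial buffer.\<close>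

fun sys :: "real^'n^'n \<Rightarrow> real^'m^'n \<Rightarrow> real^'n^'m \<Rightarrow> nat \<Rightarrow>
    (nat \<Rightarrow> nat) \<Rightarrow> (nat \<Rightarrow> bool) \<Rightarrow> (nat \<Rightarrow> bool) \<Rightarrow>
    real^'n \<Rightarrow> real^'n \<Rightarrow> (nat \<Rightarrow> real^'m) \<Rightarrow> (nat \<Rightarrow> real^'n) \<Rightarrow> nat \<Rightarrow>
    (real^'n) \<times> (real^'n) \<times> (nat \<Rightarrow> real^'m)" where
  "sys A B K v a dl gm x0 xh0 U0 w 0 = (x0, xh0, U0)"
| "sys A B K v a dl gm x0 xh0 U0 w (Suc k) =
     (let (x, xh, Up) = sys A B K v a dl gm x0 xh0 U0 w k;
          U = (if a k = 2 \<and> gm k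
               then (\<lambda>i. if i < v then K *v (mpow (A + B ** K) i *v xh) else 0)
               else (\<lambda>i. if i + 1 < v then Up (i + 1) else 0));
          u = U 0
      in (A *v x + B *v u + w k,
          (if a k = 1 \<and> dl k then A *v x + B *v u else A *v xh + B *v u),
          U))"

definition state :: "real^'n^'n \<Rightarrow> real^'m^'n \<Rightarrow> real^'n^'m \<Rightarrow> nat \<Rightarrow>
    (nat \<Rightarrow> nat) \<Rightarrow> (nat \<Rightarrow> bool) \<Rightarrow> (nat \<Rightarrow> bool) \<Rightarrow>
    real^'n \<Rightarrow> real^'n \<Rightarrow> (nat \<Rightarrow> real^'m) \<Rightarrow> (nat \<Rightarrow> real^'n) \<Rightarrow> nat \<Rightarrow> real^'n" where
  "state A B K v a dl gm x0 xh0 U0 w k = fst (sys A B K v a dl gm x0 xh0 U0 w k)"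

text \<open>tau_0 = tau0 is an arbitrary (unspecified) initial value.\<close>
fun tau :: "(nat \<Rightarrow> nat) \<Rightarrow> (nat \<Rightarrow> bool) \<Rightarrow> nat \<Rightarrow> nat \<Rightarrow> nat" where
  "tau a dl tau0 0 = tau0"
| "tau a dl tau0 (Suc k) = (if a k = 1 \<and> dl k then 1 else tau a dl tau0 k + 1)"

definition ctrl_succ :: "(nat \<Rightarrow> nat) \<Rightarrow> (nat \<Rightarrow> bool) \<Rightarrow> nat \<Rightarrow> nat set" where
  "ctrl_succ a gm k = {j. j < k \<and> a j = 2 \<and> gm j}"

text \<open>t a gm k i = t^i_k, the i-th most recent (i \<ge> 1) successful controller slot before k.\<close>
definition tsl :: "(nat \<Rightarrow> nat) \<Rightarrow> (nat \<Rightarrow> bool) \<Rightarrow> nat \<Rightarrow> nat \<Rightarrow> nat" where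
  "tsl a gm k i = rev (sorted_list_of_set (ctrl_succ a gm k)) ! (i - 1)"

definition tau_par :: "(nat \<Rightarrow> nat) \<Rightarrow> (nat \<Rightarrow> bool) \<Rightarrow> (nat \<Rightarrow> bool) \<Rightarrow> nat \<Rightarrow> nat \<Rightarrow> nat \<Rightarrow> nat" where
  "tau_par a dl gm tau0 k i = (if i = 0 then tau a dl tau0 k else tau a dl tau0 (tsl a gm k i))"

definition eta_par :: "(nat \<Rightarrow> nat) \<Rightarrow> (nat \<Rightarrow> bool) \<Rightarrow> nat \<Rightarrow> nat \<Rightarrow> nat" where
  "eta_par a gm k i = (if i = 0 then k - tsl a gm k 1 else tsl a gm k i - tsl a gm k (i + 1))"

definition phi_par :: "(nat \<Rightarrow> nat) \<Rightarrow> (nat \<Rightarrow> bool) \<Rightarrow> (nat \<Rightarrow> bool) \<Rightarrow> nat \<Rightarrow> nat \<Rightarrow> nat \<Rightarrow> nat" where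
  "phi_par a dl gm tau0 k i = eta_par a gm k i + tau_par a dl gm tau0 k (i + 1)"

definition Fm :: "real^'n^'n \<Rightarrow> real^'n^'n \<Rightarrow> nat \<Rightarrow> real^'n^'n" where
  "Fm A R t = (\<Sum>i = 1..t. mpow A (i - 1) ** R ** transpose (mpow A (i - 1)))"

definition Gm :: "real^'n^'n \<Rightarrow> nat \<Rightarrow> real^'n^'n \<Rightarrow> real^'n^'n" where
  "Gm M x Y = mpow M x ** Y ** transpose (mpow M x)"

end

theory Submission
  imports Defs
begin


lemma gauss_quad:
  fixes X :: "'w \<Rightarrow> real^'n"
  assumes P: "prob_space M" and G: "centered_gaussian M X R" and Rpd: "pos_def R" and c: "c \<noteq> 0"
  shows "integrable M (\<lambda>\<omega>. (c \<bullet> X \<omega>)^2) \<and> integral\<^sup>L M (\<lambda>\<omega>. (c \<bullet> X \<omega>)^2) = c \<bullet> (R *v c)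
       \<and> integrable M (\<lambda>\<omega>. c \<bullet> X \<omega>) \<and> integral\<^sup>L M (\<lambda>\<omega>. c \<bullet> X \<omega>) = 0"
proof -
  interpret prob_space M by fact
  define s where "s = sqrt (c \<bullet> (R *v c))"
  have pos: "c \<bullet> (R *v c) > 0" using Rpd c unfolding pos_def_def by auto
  then have s: "s > 0" unfolding s_def by simp
  have D: "distributed M lborel (\<lambda>\<omega>. c \<bullet> X \<omega>) (\<lambda>y. ennreal (normal_density 0 s y))"
    using G c unfolding centered_gaussian_def s_def by auto
  have i1: "integrable M (\<lambda>\<omega>. c \<bullet> X \<omega>)"
    by (rule distributed_integrable_var[OF D]) (auto intro: integrable_normal_moment_nz_1[OF s])
  have e1: "integral\<^sup>L M (\<lambda>\<omega>. c \<bullet> X \<omega>) = 0"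
    using normal_distributed_expectation[OF s D] by simp
  have i2: "integrable M (\<lambda>\<omega>. (c \<bullet> X \<omega>)^2)"
    using distributed_integrable[OF D, of "\<lambda>x. x^2"] integrable_normal_moment[OF s, of 0 2] by simp
  have "variance (\<lambda>\<omega>. c \<bullet> X \<omega>) = s^2" using normal_distributed_variance[OF s D] .
  then have e2: "integral\<^sup>L M (\<lambda>\<omega>. (c \<bullet> X \<omega>)^2) = c \<bullet> (R *v c)"
    using e1 pos unfolding s_def by simp
  show ?thesis using i1 i2 e1 e2 by simp
qed

lemma gauss_second:
  fixes X :: "'w \<Rightarrow> real^'n"
  assumes P: "prob_space M" and G: "centered_gaussian M X R" and Rpd: "pos_def R"
  shows "integrable M (\<lambda>\<omega>. X \<omega> $ p * X \<omega> $ q) \<and> integral\<^sup>L M (\<lambda>\<omega>. X \<omega> $ p * X \<omega> $ q) = R $ p $ q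
       \<and> integrable M (\<lambda>\<omega>. X \<omega> $ p) \<and> integral\<^sup>L M (\<lambda>\<omega>. X \<omega> $ p) = 0"
proof -
  have sym: "R $ q $ p = R $ p $ q" using Rpd unfolding pos_def_def
  proof -
    have "transpose R $ q $ p = R $ q $ p" using Rpd unfolding pos_def_def by simp
    then show ?thesis by (simp add: transpose_def)
  qed
  have ax: "\<And>i. axis i (1::real) \<noteq> (0::real^'n)" by (simp add: axis_eq_0_iff)
  have one: "\<And>i x. axis i 1 \<bullet> (x::real^'n) = x $ i" by (simp add: inner_axis')
  have oneR: "\<And>i. axis i 1 \<bullet> (R *v axis i 1) = R $ i $ i"
    by (simp add: inner_axis' matrix_vector_mult_basis column_def)
  have Qp: "integrable M (\<lambda>\<omega>. (X \<omega> $ p)^2) \<and> integral\<^sup>L M (\<lambda>\<omega>. (X \<omega> $ p)^2) = R $ p $ p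
       \<and> integrable M (\<lambda>\<omega>. X \<omega> $ p) \<and> integral\<^sup>L M (\<lambda>\<omega>. X \<omega> $ p) = 0" for p
    using gauss_quad[OF P G Rpd ax[of p]] oneR[of p] by (simp add: one)
  show ?thesis
  proof (cases "p = q")
    case True then show ?thesis using Qp[of p] by (simp add: power2_eq_square)
  next
    case False
    define c where "c = axis p (1::real) + axis q 1"
    have "c $ p = 1" using False unfolding c_def by (simp add: axis_def)
    then have c0: "c \<noteq> 0" by auto
    have cX: "\<And>\<omega>. c \<bullet> X \<omega> = X \<omega> $ p + X \<omega> $ q"
      unfolding c_def by (simp add: inner_add_left inner_axis')
    have cR: "c \<bullet> (R *v c) = R$p$p + R$p$q + R$q$p + R$q$q"
      unfolding c_def by (simp add: inner_add_left inner_axis' matrix_vector_right_distrib matrix_vector_mult_basis column_def)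
    have Q: "integrable M (\<lambda>\<omega>. (X \<omega> $ p + X \<omega> $ q)^2) \<and> integral\<^sup>L M (\<lambda>\<omega>. (X \<omega> $ p + X \<omega> $ q)^2) = R$p$p + R$p$q + R$q$p + R$q$q"
      using gauss_quad[OF P G Rpd c0] by (simp add: cX cR)
    have eq: "(\<lambda>\<omega>. X \<omega> $ p * X \<omega> $ q) = (\<lambda>\<omega>. ((X \<omega> $ p + X \<omega> $ q)^2 - (X \<omega> $ p)^2 - (X \<omega> $ q)^2) / 2)"
      by (simp add: power2_eq_square algebra_simps)
    have I: "integrable M (\<lambda>\<omega>. ((X \<omega> $ p + X \<omega> $ q)^2 - (X \<omega> $ p)^2 - (X \<omega> $ q)^2) / 2)"
      using Q Qp[of p] Qp[of q] by auto
    have "integral\<^sup>L M (\<lambda>\<omega>. ((X \<omega> $ p + X \<omega> $ q)^2 - (X \<omega> $ p)^2 - (X \<omega> $ q)^2) / 2)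
        = (R$p$p + R$p$q + R$q$p + R$q$q - R$p$p - R$q$q) / 2"
      using Q Qp[of p] Qp[of q] by (simp add: Bochner_Integration.integral_diff)
    then show ?thesis using I Qp[of p] sym by (simp add: eq)
  qed
qed



lemma indep_cross:
  fixes w :: "nat \<Rightarrow> 'w \<Rightarrow> real^'n"
  assumes P: "prob_space M"
    and indep: "prob_space.indep_vars M (\<lambda>_. borel) (\<lambda>i. case i of None \<Rightarrow> x0 | Some j \<Rightarrow> w j) UNIV"
    and ab: "a \<noteq> b"
    and ia: "integrable M (\<lambda>\<omega>. w a \<omega> $ p)" and ib: "integrable M (\<lambda>\<omega>. w b \<omega> $ q)"
  shows "integrable M (\<lambda>\<omega>. w a \<omega> $ p * w b \<omega> $ q) \<and>
         integral\<^sup>L M (\<lambda>\<omega>. w a \<omega> $ p * w b \<omega> $ q) = integral\<^sup>L M (\<lambda>\<omega>. w a \<omega> $ p) * integral\<^sup>L M (\<lambda>\<omega>. w b \<omega> $ q)"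
proof -
  interpret prob_space M by fact
  let ?X = "(\<lambda>i. case i of None \<Rightarrow> x0 | Some j \<Rightarrow> w j)"
  have I: "indep_var (PiM {Some a} (\<lambda>_. borel)) (\<lambda>\<omega>. restrict (\<lambda>i. ?X i \<omega>) {Some a})
             (PiM {Some b} (\<lambda>_. borel)) (\<lambda>\<omega>. restrict (\<lambda>i. ?X i \<omega>) {Some b})"
    by (rule indep_var_restrict[OF indep]) (use ab in auto)
  have m1: "(\<lambda>f. f (Some a) $ p) \<in> measurable (PiM {Some a} (\<lambda>_. borel)) (borel :: real measure)"
    by (rule measurable_compose[OF measurable_component_singleton]) (auto intro: borel_measurable_continuous_onI continuous_intros)
  have m2: "(\<lambda>f. f (Some b) $ q) \<in> measurable (PiM {Some b} (\<lambda>_. borel)) (borel :: real measure)"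
    by (rule measurable_compose[OF measurable_component_singleton]) (auto intro: borel_measurable_continuous_onI continuous_intros)
  have I2: "indep_var borel ((\<lambda>f. f (Some a) $ p) \<circ> (\<lambda>\<omega>. restrict (\<lambda>i. ?X i \<omega>) {Some a}))
                      borel ((\<lambda>f. f (Some b) $ q) \<circ> (\<lambda>\<omega>. restrict (\<lambda>i. ?X i \<omega>) {Some b}))"
    by (rule indep_var_compose[OF I m1 m2])
  have e1: "((\<lambda>f. f (Some a) $ p) \<circ> (\<lambda>\<omega>. restrict (\<lambda>i. ?X i \<omega>) {Some a})) = (\<lambda>\<omega>. w a \<omega> $ p)"
    by (simp add: fun_eq_iff)
  have e2: "((\<lambda>f. f (Some b) $ q) \<circ> (\<lambda>\<omega>. restrict (\<lambda>i. ?X i \<omega>) {Some b})) = (\<lambda>\<omega>. w b \<omega> $ q)"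
    by (simp add: fun_eq_iff)
  have I3: "indep_var borel (\<lambda>\<omega>. w a \<omega> $ p) borel (\<lambda>\<omega>. w b \<omega> $ q)" using I2 unfolding e1 e2 .
  show ?thesis using indep_var_integrable[OF I3 ia ib] indep_var_lebesgue_integral[OF I3 ia ib] by simp
qed



definition Emat :: "'n \<Rightarrow> 'n \<Rightarrow> real^'n^'n" where
  "Emat p q = (\<chi> i j. if i = p \<and> j = q then 1 else 0)"

lemma Emat_sum: "(\<Sum>p\<in>UNIV. \<Sum>q\<in>UNIV. c p q *\<^sub>R Emat p q) = (\<chi> i j. c i j)"
proof -
  have e: "\<And>P Q a. (if P \<and> Q then a else (0::real)) = (if P then if Q then a else 0 else 0)" by simp
  have "(\<Sum>p\<in>UNIV. \<Sum>q\<in>UNIV. c p q *\<^sub>R Emat p q) $ i $ j = c i j" for i j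
  proof -
    have "(\<Sum>p\<in>UNIV. \<Sum>q\<in>UNIV. c p q *\<^sub>R Emat p q) $ i $ j
       = (\<Sum>p\<in>UNIV. (if p = i then (\<Sum>q\<in>UNIV. if q = j then c p q else 0) else 0))"
    proof -
      have "(\<Sum>p\<in>UNIV. \<Sum>q\<in>UNIV. c p q *\<^sub>R Emat p q) $ i $ j = (\<Sum>p\<in>UNIV. \<Sum>q\<in>UNIV. c p q * (Emat p q $ i $ j))"
        by simp
      also have "\<dots> = (\<Sum>p\<in>UNIV. \<Sum>q\<in>UNIV. (if p = i then (if q = j then c p q else 0) else 0))"
        by (intro sum.cong refl) (auto simp: Emat_def)
      also have "\<dots> = (\<Sum>p\<in>UNIV. (if p = i then (\<Sum>q\<in>UNIV. if q = j then c p q else 0) else 0))"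
        by (intro sum.cong refl) auto
      finally show ?thesis .
    qed
    also have "\<dots> = c i j" by simp
    finally show ?thesis .
  qed
  then show ?thesis by (simp add: vec_eq_iff)
qed

lemma outer_Emat: "outer x = (\<Sum>p\<in>UNIV. \<Sum>q\<in>UNIV. (x $ p * x $ q) *\<^sub>R Emat p q)"
  by (simp add: Emat_sum outer_def)

lemma moments:
  fixes w :: "nat \<Rightarrow> 'w \<Rightarrow> real^'n"
  assumes P: "prob_space M"
    and gauss: "\<And>j. centered_gaussian M (w j) R"
    and Rpd: "pos_def R"
    and indep: "prob_space.indep_vars M (\<lambda>_. borel) (\<lambda>i. case i of None \<Rightarrow> x0 | Some j \<Rightarrow> w j) UNIV"
  shows "integrable M (\<lambda>\<omega>. w a \<omega> $ r * w b \<omega> $ s) \<and>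
         integral\<^sup>L M (\<lambda>\<omega>. w a \<omega> $ r * w b \<omega> $ s) = (if a = b then R $ r $ s else 0)"
proof (cases "a = b")
  case True then show ?thesis using gauss_second[OF P gauss Rpd] by simp
next
  case False
  show ?thesis using indep_cross[OF P indep False] gauss_second[OF P gauss Rpd] False by simp
qed

lemma lin_cov:
  fixes w :: "nat \<Rightarrow> 'w \<Rightarrow> real^'n" and C :: "'j \<Rightarrow> real^'n^'n"
  assumes P: "prob_space M"
    and gauss: "\<And>j. centered_gaussian M (w j) R"
    and Rpd: "pos_def R"
    and indep: "prob_space.indep_vars M (\<lambda>_. borel) (\<lambda>i. case i of None \<Rightarrow> x0 | Some j \<Rightarrow> w j) UNIV"
    and fin: "finite J" and inj: "inj_on f J"
  shows "integrable M (\<lambda>\<omega>. outer (\<Sum>j\<in>J. C j *v w (f j) \<omega>)) \<and>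
         integral\<^sup>L M (\<lambda>\<omega>. outer (\<Sum>j\<in>J. C j *v w (f j) \<omega>)) = (\<Sum>j\<in>J. C j ** R ** transpose (C j))"
proof -
  note mom = moments[OF P gauss Rpd indep]
  define Y where "Y \<omega> = (\<Sum>j\<in>J. C j *v w (f j) \<omega>)" for \<omega>
  have Yc: "Y \<omega> $ p = (\<Sum>j\<in>J. \<Sum>r\<in>UNIV. C j $ p $ r * w (f j) \<omega> $ r)" for \<omega> p
    by (simp add: Y_def matrix_vector_mult_def)
  have prod: "Y \<omega> $ p * Y \<omega> $ q = (\<Sum>j\<in>J. \<Sum>r\<in>UNIV. \<Sum>j'\<in>J. \<Sum>s\<in>UNIV.
        (C j $ p $ r * C j' $ q $ s) * (w (f j) \<omega> $ r * w (f j') \<omega> $ s))" for \<omega> p q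
    unfolding Yc sum_product by (simp add: sum_distrib_left sum_distrib_right mult_ac) (rule sum.cong[OF refl], rule sum.swap)
  have int: "integrable M (\<lambda>\<omega>. Y \<omega> $ p * Y \<omega> $ q)" for p q
    unfolding prod using mom by (intro Bochner_Integration.integrable_sum integrable_mult_right) auto
  have ex: "integral\<^sup>L M (\<lambda>\<omega>. Y \<omega> $ p * Y \<omega> $ q) = (\<Sum>j\<in>J. C j ** R ** transpose (C j)) $ p $ q" for p q
  proof -
    have "integral\<^sup>L M (\<lambda>\<omega>. Y \<omega> $ p * Y \<omega> $ q) = (\<Sum>j\<in>J. \<Sum>r\<in>UNIV. \<Sum>j'\<in>J. \<Sum>s\<in>UNIV.
        (C j $ p $ r * C j' $ q $ s) * (if f j = f j' then R $ r $ s else 0))"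
      unfolding prod using mom by (simp add: Bochner_Integration.integral_sum Bochner_Integration.integrable_sum)
    also have "\<dots> = (\<Sum>j\<in>J. \<Sum>r\<in>UNIV. \<Sum>j'\<in>J.
        (if j' = j then (\<Sum>s\<in>UNIV. (C j $ p $ r * C j $ q $ s) * R $ r $ s) else 0))"
    proof -
      have fe: "\<And>j j'. j\<in>J \<Longrightarrow> j'\<in>J \<Longrightarrow> (f j = f j') = (j' = j)" using inj by (auto simp: inj_on_def)
      show ?thesis by (intro sum.cong refl) (auto simp: fe)
    qed
    also have "\<dots> = (\<Sum>j\<in>J. \<Sum>r\<in>UNIV. \<Sum>s\<in>UNIV. C j $ p $ r * C j $ q $ s * R $ r $ s)"
      using fin by (simp add: sum.delta')
    also have "\<dots> = (\<Sum>j\<in>J. C j ** R ** transpose (C j)) $ p $ q"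
      by (simp add: matrix_matrix_mult_def transpose_def sum_distrib_left sum_distrib_right mult_ac)
         (rule sum.cong[OF refl], rule sum.swap)
    finally show ?thesis .
  qed
  have O: "(\<lambda>\<omega>. outer (Y \<omega>)) = (\<lambda>\<omega>. \<Sum>p\<in>UNIV. \<Sum>q\<in>UNIV. (Y \<omega> $ p * Y \<omega> $ q) *\<^sub>R Emat p q)"
    by (simp add: outer_Emat)
  have I: "integrable M (\<lambda>\<omega>. outer (Y \<omega>))"
    unfolding O using int by (intro Bochner_Integration.integrable_sum integrable_scaleR_left) auto
  have "integral\<^sup>L M (\<lambda>\<omega>. outer (Y \<omega>)) = (\<Sum>p\<in>UNIV. \<Sum>q\<in>UNIV. integral\<^sup>L M (\<lambda>\<omega>. Y \<omega> $ p * Y \<omega> $ q) *\<^sub>R Emat p q)"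
    unfolding O using int by (simp add: Bochner_Integration.integral_sum Bochner_Integration.integrable_sum)
  also have "\<dots> = (\<Sum>j\<in>J. C j ** R ** transpose (C j))"
    unfolding ex Emat_sum by (simp add: vec_eq_iff)
  finally show ?thesis using I unfolding Y_def by simp
qed



lemma mpow_add: "mpow M (i + j) = mpow M i ** mpow M j"
  by (induction i) (simp_all add: matrix_mul_assoc)

lemma mpow_ge: "mpow M v = 0 \<Longrightarrow> v \<le> n \<Longrightarrow> mpow M n = 0"
  using mpow_add[of M "n - v" v] by (simp add: matrix_mul_assoc)

lemma mpow_ge': "mpow M v = 0 \<Longrightarrow> v \<le> n \<Longrightarrow> mpow M n *v x = 0"
  using mpow_ge[of M v n] by auto

lemma mat_add_rdistrib: "((A::real^'n^'m) + B) ** C = A ** C + B ** C"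
  by (simp add: matrix_matrix_mult_def vec_eq_iff sum.distrib algebra_simps)

definition Ev :: "real^'n^'n \<Rightarrow> (nat \<Rightarrow> real^'n) \<Rightarrow> nat \<Rightarrow> nat \<Rightarrow> real^'n" where
  "Ev A w t \<tau> = (\<Sum>l<\<tau>. mpow A l *v w (t - 1 - l))"

lemma Ev_step: "A *v Ev A w t \<tau> + w t = Ev A w (Suc t) (Suc \<tau>)"
proof -
  have "Ev A w (Suc t) (Suc \<tau>) = w t + (\<Sum>l<\<tau>. mpow A (Suc l) *v w (t - 1 - l))"
    unfolding Ev_def sum.lessThan_Suc_shift by simp
  also have "\<dots> = w t + A *v Ev A w t \<tau>"
    unfolding Ev_def by (simp add: linear_sum[OF matrix_vector_mul_linear] matrix_vector_mul_assoc)
  finally show ?thesis by simp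
qed

lemma Ev_diff: assumes "\<tau> \<le> \<phi>" shows "Ev A w t \<phi> - Ev A w t \<tau> = (\<Sum>l\<in>{\<tau>..<\<phi>}. mpow A l *v w (t - 1 - l))"
proof -
  have "(\<Sum>l<\<phi>. mpow A l *v w (t - 1 - l)) = (\<Sum>l<\<tau>. mpow A l *v w (t - 1 - l)) + (\<Sum>l\<in>{\<tau>..<\<phi>}. mpow A l *v w (t - 1 - l))"
    using sum.atLeastLessThan_concat[of 0 \<tau> \<phi> "\<lambda>l. mpow A l *v w (t - 1 - l)"] assms by (simp add: lessThan_atLeast0)
  then show ?thesis unfolding Ev_def by simp
qed

lemma tau_le: "tau a dl tau0 (t + d) \<le> tau a dl tau0 t + d"
  by (induction d) auto

context
  fixes A :: "real^'n^'n" and B :: "real^'m^'n" and K :: "real^'n^'m"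
    and v :: nat and a :: "nat \<Rightarrow> nat" and dl gm :: "nat \<Rightarrow> bool"
    and x0 xh0 :: "real^'n" and U0 :: "nat \<Rightarrow> real^'m" and w :: "nat \<Rightarrow> real^'n"
begin

abbreviation "sst j \<equiv> sys A B K v a dl gm x0 xh0 U0 w j"
abbreviation "xst j \<equiv> fst (sst j)"
abbreviation "xhst j \<equiv> fst (snd (sst j))"
abbreviation "ubst j \<equiv> snd (snd (sst j))"
abbreviation "Mcl \<equiv> A + B ** K"

lemma sysS:
  "ubst (Suc j) = (if a j = 2 \<and> gm j then (\<lambda>i. if i < v then K *v (mpow Mcl i *v xhst j) else 0)
                  else (\<lambda>i. if i + 1 < v then ubst j (i + 1) else 0))"
  "xst (Suc j) = A *v xst j + B *v ubst (Suc j) 0 + w j"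
  "xhst (Suc j) = (if a j = 1 \<and> dl j then A *v xst j + B *v ubst (Suc j) 0 else A *v xhst j + B *v ubst (Suc j) 0)"
  by (simp_all add: Let_def split_beta)

declare sys.simps(2)[simp del]

lemma err_step: "xst (Suc j) - xhst (Suc j) = (if a j = 1 \<and> dl j then w j else A *v (xst j - xhst j) + w j)"
  by (simp only: sysS(2,3)) (simp add: matrix_vector_mult_diff_distrib)

lemma err_formula:
  "(\<exists>s<j. a s = 1 \<and> dl s) \<Longrightarrow> xst j - xhst j = Ev A w j (tau a dl tau0 j) \<and> tau a dl tau0 j \<le> j"
proof (induction j)
  case 0 then show ?case by simp
next
  case (Suc j)
  show ?case
  proof (cases "a j = 1 \<and> dl j")
    case True then show ?thesis by (simp add: err_step Ev_def)
  next
    case False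
    then have "\<exists>s<j. a s = 1 \<and> dl s" using Suc.prems less_Suc_eq by auto
    with Suc.IH have "xst j - xhst j = Ev A w j (tau a dl tau0 j)" "tau a dl tau0 j \<le> j" by auto
    then show ?thesis using False by (auto simp: err_step Ev_step)
  qed
qed

lemma buffer:
  assumes vc: "mpow Mcl v = 0" and st: "a t = 2 \<and> gm t"
    and ns: "\<forall>s. t < s \<and> s \<le> t + d \<longrightarrow> \<not> (a s = 2 \<and> gm s)"
  shows "ubst (Suc (t + d)) = (\<lambda>i. if i + d < v then K *v (mpow Mcl (i + d) *v xhst t) else 0)"
  using ns
proof (induction d)
  case 0 then show ?case using st by (simp add: sysS(1) fun_eq_iff)
next
  case (Suc d)
  have "\<not> (a (Suc (t + d)) = 2 \<and> gm (Suc (t + d)))" using Suc.prems by auto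
  then have "ubst (Suc (Suc (t + d))) = (\<lambda>i. if i + 1 < v then ubst (Suc (t + d)) (i + 1) else 0)"
    by (auto simp: sysS(1))
  also have "\<dots> = (\<lambda>i. if i + Suc d < v then K *v (mpow Mcl (i + Suc d) *v xhst t) else 0)"
    using Suc by (auto simp: fun_eq_iff)
  finally show ?case by simp
qed

lemma input:
  assumes vc: "mpow Mcl v = 0" and st: "a t = 2 \<and> gm t"
    and ns: "\<forall>s. t < s \<and> s \<le> t + d \<longrightarrow> \<not> (a s = 2 \<and> gm s)"
  shows "ubst (Suc (t + d)) 0 = K *v (mpow Mcl d *v xhst t)"
  using buffer[OF vc st ns] mpow_ge'[OF vc, of d] by auto

lemma Xform:
  assumes vc: "mpow Mcl v = 0" and st: "a t = 2 \<and> gm t"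
    and ns: "\<forall>s. t < s \<and> s < t + d \<longrightarrow> \<not> (a s = 2 \<and> gm s)"
    and e: "xst t - xhst t = Ev A w t \<tau>"
  shows "xst (t + d) = mpow Mcl d *v xhst t + Ev A w (t + d) (d + \<tau>)"
  using ns
proof (induction d)
  case 0 then show ?case using e by (simp add: algebra_simps)
next
  case (Suc d)
  have ns': "\<forall>s. t < s \<and> s \<le> t + d \<longrightarrow> \<not> (a s = 2 \<and> gm s)" using Suc.prems by auto
  have IH: "xst (t + d) = mpow Mcl d *v xhst t + Ev A w (t + d) (d + \<tau>)" using Suc by auto
  have "xst (t + Suc d) = A *v xst (t + d) + B *v (K *v (mpow Mcl d *v xhst t)) + w (t + d)"
    using sysS(2)[of "t + d"] input[OF vc st ns'] by simp
  also have "\<dots> = Mcl *v (mpow Mcl d *v xhst t) + (A *v Ev A w (t + d) (d + \<tau>) + w (t + d))"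
    unfolding IH by (simp add: matrix_vector_right_distrib mat_add_rdistrib matrix_vector_mult_add_rdistrib matrix_vector_mul_assoc matrix_mul_assoc)
  also have "\<dots> = mpow Mcl (Suc d) *v xhst t + Ev A w (t + Suc d) (Suc d + \<tau>)"
    by (simp add: Ev_step matrix_vector_mul_assoc)
  finally show ?case .
qed

lemma chain:
  fixes T :: "nat \<Rightarrow> nat" and tau0 :: nat
  assumes vc: "mpow Mcl v = 0"
    and dec: "\<And>i. i < v \<Longrightarrow> T (Suc i) < T i"
    and sc: "\<And>i. i < v \<Longrightarrow> a (T (Suc i)) = 2 \<and> gm (T (Suc i))"
    and gap: "\<And>i s. i < v \<Longrightarrow> T (Suc i) < s \<Longrightarrow> s < T i \<Longrightarrow> \<not> (a s = 2 \<and> gm s)"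
    and sens: "\<exists>j < T v. a j = 1 \<and> dl j"
  shows "xst (T 0) = (\<Sum>i<v. mpow Mcl (\<Sum>j<i. T j - T (Suc j)) *v
            (Ev A w (T i) ((T i - T (Suc i)) + tau a dl tau0 (T (Suc i)))
             - Ev A w (T i) (if i = 0 then 0 else tau a dl tau0 (T i))))"
proof -
  define tp where "tp i = (if i = 0 then 0 else tau a dl tau0 (T i))" for i
  define ph where "ph i = (T i - T (Suc i)) + tau a dl tau0 (T (Suc i))" for i
  define sm where "sm i = (\<Sum>j<i. T j - T (Suc j))" for i
  have anti: "m \<le> n \<Longrightarrow> n \<le> v \<Longrightarrow> T n \<le> T m" for m n
  proof (induction n)
    case 0 then show ?case by simp
  next
    case (Suc n) then show ?case using dec[of n] by (auto simp: le_Suc_eq)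
  qed
  have sensm: "1 \<le> m \<Longrightarrow> m \<le> v \<Longrightarrow> xst (T m) - xhst (T m) = Ev A w (T m) (tp m)" for m
  proof -
    assume "1 \<le> m" "m \<le> v"
    then have "\<exists>j < T m. a j = 1 \<and> dl j" using sens anti[of m v] by (auto intro: less_le_trans)
    then show ?thesis using err_formula[of "T m" tau0] \<open>1 \<le> m\<close> unfolding tp_def by auto
  qed
  have step: "m < v \<Longrightarrow> xst (T m) = mpow Mcl (T m - T (Suc m)) *v (xst (T (Suc m)) - Ev A w (T (Suc m)) (tp (Suc m)))
                  + Ev A w (T m) (ph m)" for m
  proof -
    assume mv: "m < v"
    have e: "xst (T (Suc m)) - xhst (T (Suc m)) = Ev A w (T (Suc m)) (tp (Suc m))"
      using sensm[of "Suc m"] mv by auto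
    have ns: "\<forall>s. T (Suc m) < s \<and> s < T (Suc m) + (T m - T (Suc m)) \<longrightarrow> \<not> (a s = 2 \<and> gm s)"
      using gap[OF mv] dec[OF mv] by auto
    have "xst (T (Suc m) + (T m - T (Suc m))) = mpow Mcl (T m - T (Suc m)) *v xhst (T (Suc m))
           + Ev A w (T (Suc m) + (T m - T (Suc m))) ((T m - T (Suc m)) + tp (Suc m))"
      by (rule Xform[OF vc sc[OF mv] ns e])
    moreover have "T (Suc m) + (T m - T (Suc m)) = T m" using dec[OF mv] by simp
    moreover have "xhst (T (Suc m)) = xst (T (Suc m)) - Ev A w (T (Suc m)) (tp (Suc m))" using e by (simp add: algebra_simps)
    ultimately show ?thesis by (simp add: ph_def tp_def)
  qed
  have gen: "m \<le> v \<Longrightarrow> xst (T 0) = (\<Sum>i<m. mpow Mcl (sm i) *v (Ev A w (T i) (ph i) - Ev A w (T i) (tp i)))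
               + mpow Mcl (sm m) *v (xst (T m) - Ev A w (T m) (tp m))" for m
  proof (induction m)
    case 0 then show ?case by (simp add: sm_def tp_def Ev_def)
  next
    case (Suc m)
    then have mv: "m < v" by simp
    have "mpow Mcl (sm m) *v (xst (T m) - Ev A w (T m) (tp m))
        = mpow Mcl (sm m) *v (Ev A w (T m) (ph m) - Ev A w (T m) (tp m))
          + mpow Mcl (sm (Suc m)) *v (xst (T (Suc m)) - Ev A w (T (Suc m)) (tp (Suc m)))"
    proof -
      have ss: "sm (Suc m) = sm m + (T m - T (Suc m))" by (simp add: sm_def)
      show ?thesis
        by (simp only: step[OF mv] ss mpow_add)
           (simp add: matrix_vector_right_distrib matrix_vector_mult_diff_distrib matrix_vector_mul_assoc algebra_simps)
    qed
    then show ?case using Suc by simp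
  qed
  have "sm v \<ge> v"
  proof -
    have "sm v \<ge> (\<Sum>j<v. 1)" unfolding sm_def using dec by (intro sum_mono) (simp add: Suc_le_eq)
    then show ?thesis by simp
  qed
  then have z: "mpow Mcl (sm v) *v (xst (T v) - Ev A w (T v) (tp v)) = 0" using mpow_ge'[OF vc] by simp
  have "xst (T 0) = (\<Sum>i<v. mpow Mcl (sm i) *v (Ev A w (T i) (ph i) - Ev A w (T i) (tp i))) + 0"
    using gen[of v, OF order_refl] unfolding z .
  then show ?thesis by (simp only: add_0_right sm_def ph_def tp_def)
qed

end


lemma mat_mul_0r: "(Z::real^'n^'m) ** (0::real^'k^'n) = 0"
  by (simp add: vec_eq_iff matrix_matrix_mult_def)
lemma mat_mul_0l: "(0::real^'n^'m) ** (Z::real^'k^'n) = 0"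
  by (simp add: vec_eq_iff matrix_matrix_mult_def)

lemma mat_sum_left: "finite I \<Longrightarrow> (Z::real^'n^'m) ** (\<Sum>i\<in>I. Y i) = (\<Sum>i\<in>I. Z ** (Y i :: real^'k^'n))"
  by (induction I rule: finite_induct) (simp_all add: mat_mul_0r matrix_add_ldistrib)
lemma mat_sum_right: "finite I \<Longrightarrow> (\<Sum>i\<in>I. Y i) ** (Z::real^'k^'n) = (\<Sum>i\<in>I. (Y i :: real^'n^'m) ** Z)"
  by (induction I rule: finite_induct) (simp_all add: mat_mul_0l mat_add_rdistrib)

lemma Fm_alt: "Fm A R t = (\<Sum>l<t. mpow A l ** R ** transpose (mpow A l))"
  by (induction t) (simp_all add: Fm_def)

lemma Fm_diff: assumes "\<tau> \<le> \<phi>" shows "Fm A R \<phi> - Fm A R \<tau> = (\<Sum>l\<in>{\<tau>..<\<phi>}. mpow A l ** R ** transpose (mpow A l))"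
proof -
  have "(\<Sum>l<\<phi>. mpow A l ** R ** transpose (mpow A l)) = (\<Sum>l<\<tau>. mpow A l ** R ** transpose (mpow A l)) + (\<Sum>l\<in>{\<tau>..<\<phi>}. mpow A l ** R ** transpose (mpow A l))"
    using sum.atLeastLessThan_concat[of 0 \<tau> \<phi> "\<lambda>l. mpow A l ** R ** transpose (mpow A l)"] assms by (simp add: lessThan_atLeast0)
  then show ?thesis unfolding Fm_alt by simp
qed

lemma tau_le_self: "(\<exists>s<j. a s = 1 \<and> dl s) \<Longrightarrow> tau a dl tau0 j \<le> j"
proof (induction j)
  case 0 then show ?case by simp
next
  case (Suc j)
  show ?case
  proof (cases "a j = 1 \<and> dl j")
    case True then show ?thesis by simp
  next
    case False
    then have "\<exists>s<j. a s = 1 \<and> dl s" using Suc.prems less_Suc_eq by auto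
    then show ?thesis using Suc.IH False by simp
  qed
qed

lemma tsl_props:
  assumes cv: "card (ctrl_succ a gm k) \<ge> v"
    and Tdef: "T = (\<lambda>i. if i = 0 then k else tsl a gm k i)"
    and iv: "i < v"
  shows "T (Suc i) < T i" "a (T (Suc i)) = 2 \<and> gm (T (Suc i))"
    "T (Suc i) < s \<Longrightarrow> s < T i \<Longrightarrow> \<not> (a s = 2 \<and> gm s)"
proof -
  define S where "S = ctrl_succ a gm k"
  define L where "L = rev (sorted_list_of_set S)"
  have fin: "finite S" unfolding S_def ctrl_succ_def by (rule finite_subset[of _ "{..<k}"]) auto
  have setL: "set L = S" unfolding L_def using fin by simp
  have lenL: "length L = card S" unfolding L_def using fin by simp
  have sorted: "sorted_wrt (>) L" unfolding L_def sorted_wrt_rev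
    using strict_sorted_list_of_set[of S] by simp
  have Tn: "T (Suc j) = L ! j" for j unfolding Tdef L_def S_def tsl_def by simp
  have iL: "i < length L" using iv cv lenL S_def by simp
  have mem: "j < length L \<Longrightarrow> L ! j \<in> S" for j using setL nth_mem by blast
  have memS: "x \<in> S \<longleftrightarrow> x < k \<and> a x = 2 \<and> gm x" for x unfolding S_def ctrl_succ_def by simp
  show sc: "a (T (Suc i)) = 2 \<and> gm (T (Suc i))" using mem[OF iL] memS Tn by simp
  have Tk: "T j \<le> k" if "j \<le> length L" for j
  proof (cases j)
    case 0 then show ?thesis using Tdef by simp
  next
    case (Suc j') then show ?thesis using mem[of j'] memS Tn that by fastforce
  qed
  show dec: "T (Suc i) < T i"
  proof (cases i)
    case 0 then show ?thesis using mem[OF iL] memS Tn Tdef by simp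
  next
    case (Suc i')
    then show ?thesis using sorted_wrt_nth_less[OF sorted, of i' i] iL Tn by simp
  qed
  assume s1: "T (Suc i) < s" and s2: "s < T i"
  show "\<not> (a s = 2 \<and> gm s)"
  proof
    assume as: "a s = 2 \<and> gm s"
    have "s < k" using s2 Tk[of i] iL by simp
    then have "s \<in> set L" using as memS setL by simp
    then obtain p where p: "p < length L" "L ! p = s" by (auto simp: in_set_conv_nth)
    show False
    proof (cases "p \<ge> i")
      case True
      then have "L ! p \<le> L ! i"
        using sorted_wrt_nth_less[OF sorted, of i p] p(1) by (cases "p = i") auto
      then show False using s1 p Tn by simp
    next
      case False
      then obtain i' where i': "i = Suc i'" by (cases i) auto
      have "L ! p \<ge> L ! i'"
        using sorted_wrt_nth_less[OF sorted, of p i'] False i' iL by (cases "p = i'") auto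
      then show False using s2 p Tn i' by simp
    qed
  qed
qed



theorem proposition1:
  fixes M :: "'w measure"
    and A :: "real^'n^'n" and B :: "real^'m^'n" and K :: "real^'n^'m"
    and R :: "real^'n^'n"
    and w :: "nat \<Rightarrow> 'w \<Rightarrow> real^'n" and x0 :: "'w \<Rightarrow> real^'n"
    and xh0 :: "real^'n" and U0 :: "nat \<Rightarrow> real^'m"
    and v :: nat and a :: "nat \<Rightarrow> nat" and dl gm :: "nat \<Rightarrow> bool"
    and tau0 :: nat and k :: nat
  assumes prob: "prob_space M"
    and gauss: "\<And>j. centered_gaussian M (w j) R"
    and Rpd: "pos_def R"
    and indep: "prob_space.indep_vars M (\<lambda>_. borel)
                  (\<lambda>i. case i of None \<Rightarrow> x0 | Some j \<Rightarrow> w j) UNIV"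
    and rhoA: "spectral_radius A > 1"
    and rhoK: "spectral_radius (A + B ** K) < 1"
    and v1: "v \<ge> 1"
    and vctrl: "mpow (A + B ** K) v = 0"
    and act: "\<And>j. a j \<in> {1, 2}"
    and dl_a: "\<And>j. dl j \<Longrightarrow> a j = 1"
    and gm_a: "\<And>j. gm j \<Longrightarrow> a j = 2"
    and enough_ctrl: "card (ctrl_succ a gm k) \<ge> v"
    and sensor_before: "\<exists>j < tsl a gm k v. a j = 1 \<and> dl j"
  shows "integrable M (\<lambda>\<omega>. outer (state A B K v a dl gm (x0 \<omega>) xh0 U0 (\<lambda>j. w j \<omega>) k)) \<and>
         integral\<^sup>L M (\<lambda>\<omega>. outer (state A B K v a dl gm (x0 \<omega>) xh0 U0 (\<lambda>j. w j \<omega>) k))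
         = Fm A R (phi_par a dl gm tau0 k 0)
           + (\<Sum>i = 0..<v - 1.
               Gm (A + B ** K)
                  ((\<Sum>j = 0..i. phi_par a dl gm tau0 k j) - (\<Sum>j = 0..i. tau_par a dl gm tau0 k (j + 1)))
                  (if phi_par a dl gm tau0 k (i + 1) > tau_par a dl gm tau0 k (i + 1)
                   then Fm A R (phi_par a dl gm tau0 k (i + 1)) - Fm A R (tau_par a dl gm tau0 k (i + 1))
                   else 0))"
proof -
  define T where "T = (\<lambda>i. if i = 0 then k else tsl a gm k i)"
  note TP = tsl_props[OF enough_ctrl T_def]
  define tp where "tp i = (if i = 0 then 0 else tau a dl tau0 (T i))" for i
  define ph where "ph i = (T i - T (Suc i)) + tau a dl tau0 (T (Suc i))" for i
  define sm where "sm i = (\<Sum>j<i. T j - T (Suc j))" for i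
  have T0: "T 0 = k" unfolding T_def by simp
  have sens: "\<exists>j < T v. a j = 1 \<and> dl j" using sensor_before v1 unfolding T_def by simp
  have anti: "m \<le> n \<Longrightarrow> n \<le> v \<Longrightarrow> T n \<le> T m" for m n
  proof (induction n)
    case 0 then show ?case by simp
  next
    case (Suc n) then show ?case using TP(1)[of n] by (auto simp: le_Suc_eq)
  qed
  have tauT: "1 \<le> i \<Longrightarrow> i \<le> v \<Longrightarrow> tau a dl tau0 (T i) \<le> T i" for i
  proof -
    assume "1 \<le> i" "i \<le> v"
    then have "\<exists>j < T i. a j = 1 \<and> dl j" using sens anti[of i v] by (auto intro: less_le_trans)
    then show ?thesis by (rule tau_le_self)
  qed
  have tauinc: "i < v \<Longrightarrow> tau a dl tau0 (T i) \<le> tau a dl tau0 (T (Suc i)) + (T i - T (Suc i))" for i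
    using tau_le[of a dl tau0 "T (Suc i)" "T i - T (Suc i)"] TP(1)[of i] by simp
  have tpph: "i < v \<Longrightarrow> tp i \<le> ph i" for i
    using tauinc[of i] unfolding tp_def ph_def by auto
  have phT: "i < v \<Longrightarrow> ph i \<le> T i" for i
    using tauT[of "Suc i"] TP(1)[of i] unfolding ph_def by simp
  define J where "J = Sigma {..<v} (\<lambda>i. {tp i..<ph i})"
  define C where "C = (\<lambda>(i::nat, l::nat). mpow (A + B ** K) (sm i) ** mpow A l)"
  define f where "f = (\<lambda>(i::nat, l::nat). T i - 1 - l)"
  have finJ: "finite J" unfolding J_def by auto
  have rep: "state A B K v a dl gm (x0 \<omega>) xh0 U0 (\<lambda>j. w j \<omega>) k = (\<Sum>p\<in>J. C p *v w (f p) \<omega>)" for \<omega>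
  proof -
    let ?w = "\<lambda>j. w j \<omega>"
    have ch0: "fst (sys A B K v a dl gm (x0 \<omega>) xh0 U0 ?w (T 0)) =
        (\<Sum>i<v. mpow (A + B ** K) (\<Sum>j<i. T j - T (Suc j)) *v
            (Ev A ?w (T i) ((T i - T (Suc i)) + tau a dl tau0 (T (Suc i)))
             - Ev A ?w (T i) (if i = 0 then 0 else tau a dl tau0 (T i))))"
      by (rule chain[OF vctrl]) (use TP sens in auto)
    have ch: "state A B K v a dl gm (x0 \<omega>) xh0 U0 ?w k =
        (\<Sum>i<v. mpow (A + B ** K) (sm i) *v (Ev A ?w (T i) (ph i) - Ev A ?w (T i) (tp i)))"
      using ch0 unfolding state_def sm_def ph_def tp_def T0 .
    have trm: "mpow (A + B ** K) (sm i) *v (Ev A ?w (T i) (ph i) - Ev A ?w (T i) (tp i))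
        = (\<Sum>l\<in>{tp i..<ph i}. C (i, l) *v w (f (i, l)) \<omega>)" if "i < v" for i
      unfolding Ev_diff[OF tpph[OF that]] C_def f_def
      by (simp add: linear_sum[OF matrix_vector_mul_linear] matrix_vector_mul_assoc)
    have "(\<Sum>i<v. mpow (A + B ** K) (sm i) *v (Ev A ?w (T i) (ph i) - Ev A ?w (T i) (tp i)))
        = (\<Sum>i<v. \<Sum>l\<in>{tp i..<ph i}. C (i, l) *v w (f (i, l)) \<omega>)"
      by (rule sum.cong[OF refl]) (simp add: trm)
    also have "\<dots> = (\<Sum>p\<in>J. C p *v w (f p) \<omega>)"
      unfolding J_def by (subst sum.Sigma) auto
    finally show ?thesis using ch by simp
  qed
  define Bd where "Bd j = T j - tau a dl tau0 (T j)" for j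
  have Bdstep: "1 \<le> j \<Longrightarrow> Suc j \<le> v \<Longrightarrow> Bd (Suc j) \<le> Bd j" for j
    using tauinc[of j] tauT[of "Suc j"] TP(1)[of j] unfolding Bd_def by simp
  have Bdanti: "1 \<le> j \<Longrightarrow> j \<le> j' \<Longrightarrow> j' \<le> v \<Longrightarrow> Bd j' \<le> Bd j" for j j'
  proof (induction j')
    case 0 then show ?case by simp
  next
    case (Suc j')
    show ?case
    proof (cases "j \<le> j'")
      case True
      then have "Bd j' \<le> Bd j" using Suc by simp
      moreover have "Bd (Suc j') \<le> Bd j'" using Bdstep[of j'] Suc.prems True by simp
      ultimately show ?thesis by simp
    next
      case False then show ?thesis using Suc.prems by (simp add: le_Suc_eq)
    qed
  qed
  have fb: "(i, l) \<in> J \<Longrightarrow> Bd (Suc i) \<le> f (i, l) \<and> (1 \<le> i \<longrightarrow> f (i, l) < Bd i) \<and> l < T i" for i l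
  proof -
    assume "(i, l) \<in> J"
    then have il: "i < v" "tp i \<le> l" "l < ph i" unfolding J_def by auto
    have "ph i \<le> T i" by (rule phT[OF il(1)])
    then show ?thesis using il tauT[of i] TP(1)[OF il(1)] unfolding f_def Bd_def ph_def tp_def by auto
  qed
  have inj: "inj_on f J"
  proof (rule inj_onI)
    fix p q assume p: "p \<in> J" and q: "q \<in> J" and e: "f p = f q"
    obtain i l where pi: "p = (i, l)" by (cases p)
    obtain i' l' where qi: "q = (i', l')" by (cases q)
    have iv: "i < v" "i' < v" using p q pi qi unfolding J_def by auto
    have "i = i'"
    proof (rule ccontr)
      assume "i \<noteq> i'"
      then consider "i < i'" | "i' < i" by linarith
      then show False
      proof cases
        case 1
        have "f (i', l') < Bd i'" using fb[of i' l'] q qi 1 by auto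
        also have "Bd i' \<le> Bd (Suc i)" using Bdanti[of "Suc i" i'] 1 iv by simp
        also have "Bd (Suc i) \<le> f (i, l)" using fb[of i l] p pi by auto
        finally show False using e pi qi by simp
      next
        case 2
        have "f (i, l) < Bd i" using fb[of i l] p pi 2 by auto
        also have "Bd i \<le> Bd (Suc i')" using Bdanti[of "Suc i'" i] 2 iv by simp
        also have "Bd (Suc i') \<le> f (i', l')" using fb[of i' l'] q qi by auto
        finally show False using e pi qi by simp
      qed
    qed
    moreover have "l = l'" using e fb[of i l] fb[of i' l'] p q pi qi \<open>i = i'\<close> unfolding f_def by auto
    ultimately show "p = q" using pi qi by simp
  qed
  note LC = lin_cov[OF prob gauss Rpd indep finJ inj, of C]
  have cov: "(\<Sum>p\<in>J. C p ** R ** transpose (C p)) =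
         Fm A R (phi_par a dl gm tau0 k 0)
           + (\<Sum>i = 0..<v - 1.
               Gm (A + B ** K)
                  ((\<Sum>j = 0..i. phi_par a dl gm tau0 k j) - (\<Sum>j = 0..i. tau_par a dl gm tau0 k (j + 1)))
                  (if phi_par a dl gm tau0 k (i + 1) > tau_par a dl gm tau0 k (i + 1)
                   then Fm A R (phi_par a dl gm tau0 k (i + 1)) - Fm A R (tau_par a dl gm tau0 k (i + 1))
                   else 0))"
  proof -
    let ?M = "A + B ** K"
    have s1: "(\<Sum>i<v. \<Sum>l\<in>{tp i..<ph i}. C (i, l) ** R ** transpose (C (i, l))) = (\<Sum>p\<in>J. C p ** R ** transpose (C p))"
      unfolding J_def by (subst sum.Sigma) auto
    have s2: "(\<Sum>l\<in>{tp i..<ph i}. C (i, l) ** R ** transpose (C (i, l)))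
        = Gm ?M (sm i) (\<Sum>l\<in>{tp i..<ph i}. mpow A l ** R ** transpose (mpow A l))" for i
      unfolding Gm_def C_def by (simp add: mat_sum_left mat_sum_right matrix_transpose_mul matrix_mul_assoc)
    have s3: "(\<Sum>l\<in>{tp i..<ph i}. mpow A l ** R ** transpose (mpow A l)) = Fm A R (ph i) - Fm A R (tp i)" if "i < v" for i
      using Fm_diff[OF tpph[OF that], of A R] by simp
    have tot: "(\<Sum>p\<in>J. C p ** R ** transpose (C p)) = (\<Sum>i<v. Gm ?M (sm i) (Fm A R (ph i) - Fm A R (tp i)))"
      unfolding s1[symmetric] by (rule sum.cong[OF refl]) (simp add: s2 s3)
    obtain v' where v': "v = Suc v'" using v1 by (cases v) auto
    have phS: "phi_par a dl gm tau0 k j = ph j" for j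
      by (cases j) (simp_all add: phi_par_def eta_par_def tau_par_def T_def ph_def)
    have tauS: "tau_par a dl gm tau0 k (j + 1) = tp (Suc j)" for j
      by (simp add: tau_par_def tp_def T_def)
    have tauS1: "tau_par a dl gm tau0 k (Suc j) = tp (Suc j)" for j
      by (simp add: tau_par_def tp_def T_def)
    have g0: "Gm ?M (sm 0) (Fm A R (ph 0) - Fm A R (tp 0)) = Fm A R (phi_par a dl gm tau0 k 0)"
      by (simp add: Gm_def sm_def tp_def Fm_def phS)
    have sumeq: "(\<Sum>j = 0..i. phi_par a dl gm tau0 k j) - (\<Sum>j = 0..i. tau_par a dl gm tau0 k (j + 1)) = sm (Suc i)" for i
    proof -
      have "(\<Sum>j = 0..i. phi_par a dl gm tau0 k j) = (\<Sum>j = 0..i. T j - T (Suc j)) + (\<Sum>j = 0..i. tau_par a dl gm tau0 k (j + 1))"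
      proof -
        have tauS2: "tau_par a dl gm tau0 k (Suc j) = tau a dl tau0 (T (Suc j))" for j
          by (simp add: tau_par_def T_def)
        show ?thesis by (simp add: phS tauS2 ph_def sum.distrib)
      qed
      then show ?thesis by (simp add: sm_def atLeast0AtMost lessThan_Suc_atMost)
    qed
    have gS: "Gm ?M (sm (Suc i)) (Fm A R (ph (Suc i)) - Fm A R (tp (Suc i))) =
        Gm ?M ((\<Sum>j = 0..i. phi_par a dl gm tau0 k j) - (\<Sum>j = 0..i. tau_par a dl gm tau0 k (j + 1)))
                  (if phi_par a dl gm tau0 k (i + 1) > tau_par a dl gm tau0 k (i + 1)
                   then Fm A R (phi_par a dl gm tau0 k (i + 1)) - Fm A R (tau_par a dl gm tau0 k (i + 1))
                   else 0)" if "i < v'" for i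
    proof -
      have le: "tp (Suc i) \<le> ph (Suc i)" using tpph[of "Suc i"] that v' by simp
      have "(if phi_par a dl gm tau0 k (i + 1) > tau_par a dl gm tau0 k (i + 1)
                   then Fm A R (phi_par a dl gm tau0 k (i + 1)) - Fm A R (tau_par a dl gm tau0 k (i + 1))
                   else 0) = Fm A R (ph (Suc i)) - Fm A R (tp (Suc i))"
        using le by (auto simp: phS tauS tauS1)
      then show ?thesis by (simp only: sumeq)
    qed
    have "(\<Sum>i<v. Gm ?M (sm i) (Fm A R (ph i) - Fm A R (tp i)))
        = Gm ?M (sm 0) (Fm A R (ph 0) - Fm A R (tp 0)) + (\<Sum>i<v'. Gm ?M (sm (Suc i)) (Fm A R (ph (Suc i)) - Fm A R (tp (Suc i))))"
      unfolding v' sum.lessThan_Suc_shift by simp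
    also have "\<dots> = Fm A R (phi_par a dl gm tau0 k 0)
           + (\<Sum>i = 0..<v - 1.
               Gm ?M
                  ((\<Sum>j = 0..i. phi_par a dl gm tau0 k j) - (\<Sum>j = 0..i. tau_par a dl gm tau0 k (j + 1)))
                  (if phi_par a dl gm tau0 k (i + 1) > tau_par a dl gm tau0 k (i + 1)
                   then Fm A R (phi_par a dl gm tau0 k (i + 1)) - Fm A R (tau_par a dl gm tau0 k (i + 1))
                   else 0))"
      unfolding g0 by (simp add: v' atLeast0LessThan gS)
    finally show ?thesis using tot by simp
  qed
  have int_eq: "(\<lambda>\<omega>. outer (state A B K v a dl gm (x0 \<omega>) xh0 U0 (\<lambda>j. w j \<omega>) k))
      = (\<lambda>\<omega>. outer (\<Sum>p\<in>J. C p *v w (f p) \<omega>))"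
    using rep by simp
  show ?thesis unfolding int_eq using LC cov by simp
qed


end
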